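(* Let $n\ge 1$ and $0\le k\le n-1$ be integers. The complement $\overline{S^k_{n-k}}$ of the generalized crown graph $S^k_{n-k}$ is word-representable. Explicitly: the graph with vertex set $\{1,\dots,n\}\cup\{1',\dots,n'\}$ in which $\{1,\dots,n\}$ and $\{1',\dots,n'\}$ are cliques and, for $i,j\in\{1,\dots,n\}$, $i$ is adjacent to $j'$ if and only if $j\equiv i+r \pmod n$ for some $r\in\{0,1,\dots,k\}$ (residues taken in $\{1,\dots,n\}$), is word-representable.
   Context: A graph $G=(V,E)$ is word-representable if there exists a word $w$ over the alphabet $V$, containing every letter of $V$ at least once, such that for all distinct $x,y\in V$, the letters $x$ and $y$ alternate in $w$ (i.e., the subword of $w$ obtained by deleting all letters other than $x,y$ has no two equal consecutive letters) if and only if $xy\in E$. The generalized crown graph $S^k_{n-k}$ is the bipartite graph with parts $X=\{1,\dots,n\}$ and $Y=\{1',\dots,n'\}$ obtained from the complete bipartite graph $K_{n,n}$ by deleting, for each $i\in\{1,\dots,n\}$, the edges from $i$ to $j'$ for all $j\equiv i,i+1,\dots,i+k \pmod n$ (with residues in $\{1,\dots,n\}$, i.e. $0'$ means $n'$). For $k=0$ this is the crown graph $H_{n,n}$. *)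

theory Defs
  imports Main
begin

definition alternate :: "'a list \<Rightarrow> 'a \<Rightarrow> 'a \<Rightarrow> bool" where
  "alternate w x y \<longleftrightarrow>
     (let u = filter (\<lambda>z. z = x \<or> z = y) w in
        \<forall>i. Suc i < length u \<longrightarrow> u ! i \<noteq> u ! Suc i)"

definition word_representable :: "'a set \<Rightarrow> ('a \<Rightarrow> 'a \<Rightarrow> bool) \<Rightarrow> bool" where
  "word_representable V E \<longleftrightarrow>
     (\<exists>w. set w = V \<and>
          (\<forall>x\<in>V. \<forall>y\<in>V. x \<noteq> y \<longrightarrow> (alternate w x y \<longleftrightarrow> E x y)))"

text \<open>Vertices: (i, False) is i, (i, True) is i', for i in {1..n}.\<close>
definition crown_vertices :: "nat \<Rightarrow> (nat \<times> bool) set" where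
  "crown_vertices n = {1..n} \<times> UNIV"

definition compl_gen_crown_adj :: "nat \<Rightarrow> nat \<Rightarrow> nat \<times> bool \<Rightarrow> nat \<times> bool \<Rightarrow> bool" where
  "compl_gen_crown_adj n k u v \<longleftrightarrow> u \<noteq> v \<and>
     (snd u = snd v \<or>
      (\<exists>i j. ((u = (i, False) \<and> v = (j, True)) \<or> (v = (i, False) \<and> u = (j, True))) \<and>
             (\<exists>r\<le>k. j mod n = (i + r) mod n)))"

end

theory Submission imports Defs "HOL-Library.Product_Lexorder" begin


lemma filter_sls:
  fixes A :: "'a::linorder set"
  assumes "finite A"
  shows "filter P (sorted_list_of_set A) = sorted_list_of_set {x\<in>A. P x}"
proof -
  have "sorted_wrt (<) (filter P (sorted_list_of_set A))"
    using assms by (simp add: sorted_wrt_filter strict_sorted_list_of_set)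
  moreover have "set (filter P (sorted_list_of_set A)) = {x\<in>A. P x}" using assms by auto
  ultimately show ?thesis using assms
    by (metis (no_types, lifting) finite_filter sorted_list_of_set.idem_if_sorted_distinct
        sorted_wrt_iff_nth_less strict_sorted_iff)
qed

lemma sorted_adj:
  fixes A :: "'a::linorder set"
  assumes "finite A"
  shows "(\<forall>i. Suc i < length (sorted_list_of_set A) \<longrightarrow>
            c (sorted_list_of_set A ! i) \<noteq> c (sorted_list_of_set A ! Suc i)) \<longleftrightarrow>
         (\<forall>k1\<in>A. \<forall>k2\<in>A. k1 < k2 \<and> c k1 = c k2 \<longrightarrow> (\<exists>k3\<in>A. k1 < k3 \<and> k3 < k2 \<and> c k3 \<noteq> c k1))"
  (is "?L \<longleftrightarrow> ?R")
proof -
  define s where "s = sorted_list_of_set A"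
  have st: "sorted_wrt (<) s" using assms by (simp add: s_def strict_sorted_list_of_set)
  have se: "set s = A" using assms by (simp add: s_def)
  have mono: "\<And>i j. i < j \<Longrightarrow> j < length s \<Longrightarrow> s!i < s!j"
    using st by (simp add: sorted_wrt_iff_nth_less)
  have mono2: "\<And>i j. i < length s \<Longrightarrow> j < length s \<Longrightarrow> s!i < s!j \<Longrightarrow> i < j"
    by (metis linorder_neqE_nat mono order_less_asym order_less_irrefl)
  show ?thesis unfolding s_def[symmetric]
  proof
    assume L: "\<forall>i. Suc i < length s \<longrightarrow> c (s ! i) \<noteq> c (s ! Suc i)"
    show ?R
    proof (intro ballI impI)
      fix k1 k2 assume k: "k1 \<in> A" "k2 \<in> A" "k1 < k2 \<and> c k1 = c k2"
      obtain i where i: "i < length s" "s!i = k1" using k se by (metis in_set_conv_nth)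
      obtain j where j: "j < length s" "s!j = k2" using k se by (metis in_set_conv_nth)
      have ij: "i < j" using mono2 i j k by blast
      have "Suc i \<noteq> j" using L ij j i k by auto
      hence sj: "Suc i < j" using ij by auto
      show "\<exists>k3\<in>A. k1 < k3 \<and> k3 < k2 \<and> c k3 \<noteq> c k1"
      proof (rule bexI[of _ "s ! Suc i"])
        have "c (s ! i) \<noteq> c (s ! Suc i)" using L sj j by auto
        thus "k1 < s ! Suc i \<and> s ! Suc i < k2 \<and> c (s ! Suc i) \<noteq> c k1"
          using sj i j mono k by auto
        show "s ! Suc i \<in> A" using sj j se by auto
      qed
    qed
  next
    assume R: ?R
    show "\<forall>i. Suc i < length s \<longrightarrow> c (s ! i) \<noteq> c (s ! Suc i)"
    proof (intro allI impI notI)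
      fix i assume a: "Suc i < length s" "c (s ! i) = c (s ! Suc i)"
      have "s!i \<in> A" "s!Suc i \<in> A" using a se by auto
      moreover have "s!i < s!Suc i" using mono a by auto
      ultimately obtain k3 where k3: "k3 \<in> A" "s!i < k3" "k3 < s!Suc i" using R a by metis
      obtain m where m: "m < length s" "s!m = k3" using k3 se by (metis in_set_conv_nth)
      have "i < m" using mono2 m k3 a by auto
      moreover have "m < Suc i" using mono2 m k3 a by auto
      ultimately show False by auto
    qed
  qed
qed

lemma alt_iff:
  fixes A :: "'a::linorder set"
  assumes "finite A"
  shows "alternate (map c (sorted_list_of_set A)) x y \<longleftrightarrow>
    (\<forall>k1\<in>{k\<in>A. c k = x \<or> c k = y}. \<forall>k2\<in>{k\<in>A. c k = x \<or> c k = y}. k1 < k2 \<and> c k1 = c k2 \<longrightarrow>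
       (\<exists>k3\<in>{k\<in>A. c k = x \<or> c k = y}. k1 < k3 \<and> k3 < k2 \<and> c k3 \<noteq> c k1))"
proof -
  have "filter (\<lambda>z. z = x \<or> z = y) (map c (sorted_list_of_set A)) =
        map c (sorted_list_of_set {k\<in>A. c k = x \<or> c k = y})"
    using assms by (simp add: filter_map comp_def filter_sls)
  thus ?thesis unfolding alternate_def Let_def
    using sorted_adj[of "{k\<in>A. c k = x \<or> c k = y}" c] assms by simp
qed

lemma interleave_ok:
  fixes a0 a1 a2 b0 b1 b2 :: "'a::linorder"
  assumes "a0<b0" "b0<a1" "a1<b1" "b1<a2" "a2<b2"
    "c a0 = x" "c a1 = x" "c a2 = x" "c b0 = y" "c b1 = y" "c b2 = y" "x \<noteq> y"
    "S = {a0,a1,a2,b0,b1,b2}"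
  shows "\<forall>k1\<in>S. \<forall>k2\<in>S. k1 < k2 \<and> c k1 = c k2 \<longrightarrow> (\<exists>k3\<in>S. k1 < k3 \<and> k3 < k2 \<and> c k3 \<noteq> c k1)"
proof -
  have o: "a0 < a1" "a0 < a2" "a0 < b1" "a0 < b2" "b0 < b1" "b0 < a2" "b0 < b2" "a1 < a2" "a1 < b2"
      "b1 < b2" using assms by (meson order.strict_trans)+
  show ?thesis using assms o
    by (auto simp: not_less_iff_gr_or_eq) 
qed



definition lab :: "nat \<Rightarrow> nat \<Rightarrow> nat" where "lab n x = (x - 1) mod n + 1"
definition ef :: "nat \<Rightarrow> nat \<Rightarrow> nat \<Rightarrow> nat" where
  "ef n k x = (if x \<le> n then 0 else if x \<le> 2*n then n-k-1
     else if x \<le> 2*n + (n-k-1) then 2*n + (n-k-1) - x else 0)"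
definition ff :: "nat \<Rightarrow> nat \<Rightarrow> nat \<Rightarrow> nat" where "ff n k x = x - 1 + ef n k x"
definition KX :: "nat \<Rightarrow> nat \<Rightarrow> nat \<Rightarrow> nat \<times> nat" where "KX n k x = (2 * ff n k x + 1, x)"
definition KY :: "nat \<Rightarrow> nat \<times> nat" where "KY u = (2 * u, u)"
definition letter :: "nat \<Rightarrow> nat \<Rightarrow> nat \<times> nat \<Rightarrow> nat \<times> bool" where
  "letter n k p = (if odd (fst p) then (lab n (snd p), False) else (lab n (snd p + k + 1), True))"
definition Keys :: "nat \<Rightarrow> nat \<Rightarrow> (nat \<times> nat) set" where
  "Keys n k = KX n k ` {1..3*n} \<union> KY ` {1..3*n}"
definition wrd :: "nat \<Rightarrow> nat \<Rightarrow> (nat \<times> bool) list" where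
  "wrd n k = map (letter n k) (sorted_list_of_set (Keys n k))"
definition rr :: "nat \<Rightarrow> nat \<Rightarrow> nat \<Rightarrow> nat" where
  "rr n k j = (if k+1 < j then j - (k+1) else j + n - (k+1))"

lemma finite_Keys: "finite (Keys n k)" by (simp add: Keys_def)

lemma lab_range: assumes "n \<ge> 1" shows "lab n x \<in> {1..n}"
proof -
  have "(x-1) mod n < n" using assms by simp
  thus ?thesis by (simp add: lab_def)
qed

lemma lab_add: assumes "1 \<le> l" "l \<le> n" shows "lab n (l + m*n) = l"
proof -
  have e: "l + m*n - 1 = (l-1) + m*n" using assms by simp
  have "(l + m*n - 1) mod n = ((l-1) + m*n) mod n" by (rule arg_cong[where f="\<lambda>z. z mod n"], fact e)
  also have "\<dots> = (l-1) mod n" by simp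
  also have "\<dots> = l - 1" using assms by simp
  finally show ?thesis using assms unfolding lab_def by simp
qed

lemma lab_periodic: assumes "1 \<le> a" shows "lab n (a + q*n) = lab n a"
proof -
  have e: "a + q*n - 1 = (a-1) + q*n" using assms by simp
  have "(a + q*n - 1) mod n = ((a-1) + q*n) mod n" by (rule arg_cong[where f="\<lambda>z. z mod n"], fact e)
  also have "\<dots> = (a-1) mod n" by simp
  finally show ?thesis unfolding lab_def by simp
qed

lemma lab_decomp: assumes "1 \<le> x" shows "x = lab n x + ((x-1) div n) * n"
proof -
  have "x - 1 = (x-1) div n * n + (x-1) mod n" by simp
  thus ?thesis using assms by (simp add: lab_def)
qed

lemma lab_small: assumes "n \<ge> 1" "1 \<le> a" "a \<le> 2*n" shows "lab n a = (if a \<le> n then a else a - n)"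
proof (cases "a \<le> n")
  case True thus ?thesis using lab_add[of a n 0] assms by simp
next
  case False
  hence "a = (a - n) + 1*n" by simp
  hence "lab n a = lab n ((a-n) + 1*n)" by simp
  also have "\<dots> = a - n" using False assms by (intro lab_add) auto
  finally show ?thesis using False by simp
qed

lemma lab_set: assumes "n \<ge> 1" "1 \<le> i" "i \<le> n"
  shows "{x\<in>{1..3*n}. lab n x = i} = {i, i+n, i+2*n}"
proof
  show "{i, i+n, i+2*n} \<subseteq> {x\<in>{1..3*n}. lab n x = i}"
    using assms lab_add[of i n 0] lab_add[of i n 1] lab_add[of i n 2] by auto
next
  show "{x\<in>{1..3*n}. lab n x = i} \<subseteq> {i, i+n, i+2*n}"
  proof
    fix x assume x: "x \<in> {x\<in>{1..3*n}. lab n x = i}"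
    hence d: "x = i + ((x-1) div n) * n" using lab_decomp[of x n] by auto
    have "x - 1 < 3*n" using x assms by auto
    hence "(x-1) div n < 3" by (rule less_mult_imp_div_less)
    hence "(x-1) div n = 0 \<or> (x-1) div n = 1 \<or> (x-1) div n = 2" by auto
    thus "x \<in> {i, i+n, i+2*n}" using d by (auto simp: mult.commute)
  qed
qed

lemma lab_between:
  assumes "n \<ge> 1" "1 \<le> a" "a < b" "lab n a = lab n b" "1 \<le> l" "l \<le> n" "l \<noteq> lab n a"
  shows "\<exists>t. a < t \<and> t < b \<and> lab n t = l"
proof -
  define c where "c = lab n a"
  define qa where "qa = (a-1) div n"
  define qb where "qb = (b-1) div n"
  have da: "a = c + qa*n" using lab_decomp[of a n] assms by (simp add: c_def qa_def)
  have db: "b = c + qb*n" using lab_decomp[of b n] assms by (simp add: c_def qb_def)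
  have c: "1 \<le> c" "c \<le> n" using lab_range[of n a] assms by (auto simp: c_def)
  have "qa < qb"
  proof (rule ccontr)
    assume "\<not> qa < qb" hence "qb*n \<le> qa*n" by simp
    thus False using da db assms by simp
  qed
  hence le: "qa*n + n \<le> qb*n" by (metis add.commute mult_Suc mult_le_mono1 Suc_leI)
  show ?thesis
  proof (cases "c < l")
    case True
    show ?thesis
      by (rule exI[of _ "l + qa*n"]) (use True c da db le assms in \<open>auto simp: c_def[symmetric] intro!: lab_add\<close>)
  next
    case False
    hence "l < c" using assms c_def by auto
    have "lab n (l + (qa+1)*n) = l" using assms by (intro lab_add) auto
    thus ?thesis using \<open>l < c\<close> c da db le assms
      by (intro exI[of _ "l + (qa+1)*n"]) (auto simp: algebra_simps)
  qed
qed

lemma Yset: assumes "n \<ge> 1" "k + 1 \<le> n" "1 \<le> j" "j \<le> n"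
  shows "{u\<in>{1..3*n}. lab n (u+k+1) = j} = {rr n k j, rr n k j + n, rr n k j + 2*n}"
proof -
  have r: "1 \<le> rr n k j" "rr n k j \<le> n" using assms by (auto simp: rr_def)
  have key: "lab n (u+k+1) = j \<longleftrightarrow> lab n u = rr n k j" if u: "1 \<le> u" for u
  proof -
    define v where "v = lab n u"
    have v: "1 \<le> v" "v \<le> n" using lab_range[of n u] assms by (auto simp: v_def)
    have e: "u + k + 1 = (v + k + 1) + ((u-1) div n) * n" using lab_decomp[of u n] u v_def by simp
    have "lab n (u+k+1) = lab n ((v + k + 1) + ((u-1) div n) * n)"
      by (rule arg_cong[where f="lab n"], fact e)
    also have "\<dots> = lab n (v+k+1)" by (rule lab_periodic) simp
    also have "\<dots> = (if v+k+1 \<le> n then v+k+1 else v+k+1-n)" using v assms by (intro lab_small) auto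
    finally show ?thesis using v assms by (auto simp: v_def[symmetric] rr_def)
  qed
  have "{u\<in>{1..3*n}. lab n (u+k+1) = j} = {u\<in>{1..3*n}. lab n u = rr n k j}" using key by auto
  thus ?thesis using lab_set[OF assms(1) r] by simp
qed

lemma ff_mono: "x \<le> y \<Longrightarrow> ff n k x \<le> ff n k y"
  unfolding ff_def ef_def by (auto split: if_splits)

lemma KX_less: "KX n k x < KX n k y \<longleftrightarrow> x < y"
proof
  assume a: "KX n k x < KX n k y"
  show "x < y"
  proof (rule ccontr)
    assume "\<not> x < y" hence "y \<le> x" by simp
    hence "ff n k y \<le> ff n k x" by (rule ff_mono)
    thus False using a \<open>y \<le> x\<close> unfolding KX_def by auto
  qed
next
  assume "x < y" thus "KX n k x < KX n k y" using ff_mono[of x y n k] unfolding KX_def by auto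
qed

lemma KY_less: "KY u < KY v \<longleftrightarrow> u < v" unfolding KY_def by auto

lemma KX_KY_less: "KX n k x < KY u \<longleftrightarrow> ff n k x < u" unfolding KX_def KY_def by auto

lemma KY_KX_less: "KY u < KX n k x \<longleftrightarrow> u \<le> ff n k x" unfolding KX_def KY_def by auto

lemma letter_KX[simp]: "letter n k (KX n k x) = (lab n x, False)" by (simp add: letter_def KX_def)
lemma letter_KY[simp]: "letter n k (KY u) = (lab n (u+k+1), True)" by (simp add: letter_def KY_def)

lemma alternate_sym: "alternate w x y = alternate w y x"
proof -
  have "(\<lambda>z. z = x \<or> z = y) = (\<lambda>z. z = y \<or> z = x)" by auto
  thus ?thesis unfolding alternate_def by simp
qed

lemma adj_sym: "compl_gen_crown_adj n k u v = compl_gen_crown_adj n k v u"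
  unfolding compl_gen_crown_adj_def by blast

lemma sameX:
  assumes "n \<ge> 1" "i \<in> {1..n}" "i' \<in> {1..n}" "i \<noteq> i'"
  shows "alternate (wrd n k) (i,False) (i',False)"
proof -
  let ?A = "{p\<in>Keys n k. letter n k p = (i,False) \<or> letter n k p = (i',False)}"
  have X: "\<exists>x\<in>{1..3*n}. p = KX n k x" if "p\<in>?A" for p using that by (auto simp: Keys_def)
  have "\<forall>k1\<in>?A. \<forall>k2\<in>?A. k1 < k2 \<and> letter n k k1 = letter n k k2 \<longrightarrow>
          (\<exists>k3\<in>?A. k1 < k3 \<and> k3 < k2 \<and> letter n k k3 \<noteq> letter n k k1)"
  proof (intro ballI impI)
    fix k1 k2 assume k1: "k1\<in>?A" and k2: "k2\<in>?A" and c: "k1 < k2 \<and> letter n k k1 = letter n k k2"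
    obtain x1 where x1: "x1\<in>{1..3*n}" "k1 = KX n k x1" using X[OF k1] by blast
    obtain x2 where x2: "x2\<in>{1..3*n}" "k2 = KX n k x2" using X[OF k2] by blast
    have lt: "x1 < x2" using c x1 x2 KX_less by auto
    have eq: "lab n x1 = lab n x2" using c x1 x2 by simp
    have l1: "lab n x1 = i \<or> lab n x1 = i'" using k1 x1 by auto
    define l where "l = (if lab n x1 = i then i' else i)"
    have l: "1 \<le> l" "l \<le> n" "l \<noteq> lab n x1" using assms l1 by (auto simp: l_def)
    obtain t where t: "x1 < t" "t < x2" "lab n t = l"
      using lab_between[OF assms(1) _ lt eq l] x1 by auto
    have tK: "KX n k t \<in> ?A" using t x1 x2 l_def by (auto simp: Keys_def)
    show "\<exists>k3\<in>?A. k1 < k3 \<and> k3 < k2 \<and> letter n k k3 \<noteq> letter n k k1"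
      using tK t x1 x2 l KX_less by (intro bexI[of _ "KX n k t"]) auto
  qed
  thus ?thesis unfolding wrd_def alt_iff[OF finite_Keys] by blast
qed

lemma sameY:
  assumes "n \<ge> 1" "j \<in> {1..n}" "j' \<in> {1..n}" "j \<noteq> j'"
  shows "alternate (wrd n k) (j,True) (j',True)"
proof -
  let ?A = "{p\<in>Keys n k. letter n k p = (j,True) \<or> letter n k p = (j',True)}"
  have Y: "\<exists>u\<in>{1..3*n}. p = KY u" if "p\<in>?A" for p using that by (auto simp: Keys_def)
  have "\<forall>k1\<in>?A. \<forall>k2\<in>?A. k1 < k2 \<and> letter n k k1 = letter n k k2 \<longrightarrow>
          (\<exists>k3\<in>?A. k1 < k3 \<and> k3 < k2 \<and> letter n k k3 \<noteq> letter n k k1)"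
  proof (intro ballI impI)
    fix k1 k2 assume k1: "k1\<in>?A" and k2: "k2\<in>?A" and c: "k1 < k2 \<and> letter n k k1 = letter n k k2"
    obtain u1 where u1: "u1\<in>{1..3*n}" "k1 = KY u1" using Y[OF k1] by blast
    obtain u2 where u2: "u2\<in>{1..3*n}" "k2 = KY u2" using Y[OF k2] by blast
    have lt: "u1+k+1 < u2+k+1" using c u1 u2 KY_less by auto
    have eq: "lab n (u1+k+1) = lab n (u2+k+1)" using c u1 u2 by simp
    have l1: "lab n (u1+k+1) = j \<or> lab n (u1+k+1) = j'" using k1 u1 by auto
    define l where "l = (if lab n (u1+k+1) = j then j' else j)"
    have l: "1 \<le> l" "l \<le> n" "l \<noteq> lab n (u1+k+1)" using assms l1 by (auto simp: l_def)
    obtain t where t: "u1+k+1 < t" "t < u2+k+1" "lab n t = l"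
      using lab_between[OF assms(1) _ lt eq l] by auto
    define u3 where "u3 = t - (k+1)"
    have u3: "t = u3 + k + 1" "u1 < u3" "u3 < u2" using t by (auto simp: u3_def)
    have tK: "KY u3 \<in> ?A" using t u3 u1 u2 l_def by (auto simp: Keys_def)
    show "\<exists>k3\<in>?A. k1 < k3 \<and> k3 < k2 \<and> letter n k k3 \<noteq> letter n k k1"
      using tK t u1 u2 u3 l KY_less by (intro bexI[of _ "KY u3"]) auto
  qed
  thus ?thesis unfolding wrd_def alt_iff[OF finite_Keys] by blast
qed

lemma modeq:
  fixes i j n s :: nat
  assumes "1 \<le> i" "i \<le> n" "1 \<le> j" "j \<le> n" "s < n"
  shows "j mod n = (i+s) mod n \<longleftrightarrow> j = i+s \<or> j+n = i+s"
proof -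
  have jm: "j mod n = (if j = n then 0 else j)" using assms by auto
  have im: "(i+s) mod n = (if i+s < n then i+s else i+s-n)"
  proof (cases "i+s < n")
    case True thus ?thesis by simp
  next
    case False
    hence "(i+s) mod n = (i+s-n) mod n" by (simp add: le_mod_geq)
    also have "\<dots> = i+s-n" using False assms by simp
    finally show ?thesis using False by simp
  qed
  show ?thesis unfolding jm im using assms by auto
qed

lemma adj_arith: "\<lbrakk>(k::nat)+1 \<le> n; 1 \<le> i; i \<le> n; 1 \<le> j; j \<le> n\<rbrakk> \<Longrightarrow>
  (\<exists>s\<le>k. j = i+s \<or> j+n = i+s) \<longleftrightarrow> (i + (n-k-1) \<le> (if k+1 < j then j - (k+1) else j + n - (k+1)) \<or>
   ((if k+1 < j then j - (k+1) else j + n - (k+1)) < i \<and> i + (n-k-1) \<le> (if k+1 < j then j - (k+1) else j + n - (k+1)) + n))"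
  apply (cases "k+1 < j")
   apply simp_all
   apply (rule iffI)
  apply (elim exE conjE disjE; arith)
  apply (cases "i \<le> j", rule exI[of _ "j - i"], arith, rule exI[of _ "j + n - i"], arith)
   apply (rule iffI)
  apply (elim exE conjE disjE; arith)
  apply (cases "i \<le> j", rule exI[of _ "j - i"], arith, rule exI[of _ "j + n - i"], arith)
  done

lemma XY:
  assumes "n \<ge> 1" "k + 1 \<le> n" "i \<in> {1..n}" "j \<in> {1..n}"
  shows "alternate (wrd n k) (i,False) (j,True) \<longleftrightarrow> (\<exists>s\<le>k. j mod n = (i+s) mod n)"
proof -
  define r where "r = rr n k j"
  define d where "d = n - k - 1"
  have r: "1 \<le> r" "r \<le> n" using assms by (auto simp: r_def rr_def)
  let ?A = "{p\<in>Keys n k. letter n k p = (i,False) \<or> letter n k p = (j,True)}"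
  have A1: "?A = KX n k ` {x\<in>{1..3*n}. lab n x = i} \<union> KY ` {u\<in>{1..3*n}. lab n (u+k+1) = j}"
    by (auto simp: Keys_def)
  have A: "?A = {KX n k i, KX n k (i+n), KX n k (i+2*n), KY r, KY (r+n), KY (r+2*n)}"
    unfolding A1 using lab_set[of n i] Yset[of n k j] assms by (simp add: r_def insert_commute)
  have Ys: "{u\<in>{1..3*n}. lab n (u+k+1) = j} = {r, r+n, r+2*n}"
    using Yset[of n k j] assms by (simp add: r_def)
  have lY: "lab n (r+k+1) = j" "lab n (r+n+k+1) = j" "lab n (r+2*n+k+1) = j"
    using Ys r by blast+
  have lX: "lab n i = i" "lab n (i+n) = i" "lab n (i+2*n) = i"
    using lab_add[of i n 0] lab_add[of i n 1] lab_add[of i n 2] assms by auto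
  have F0: "ff n k i = i - 1" using assms by (simp add: ff_def ef_def)
  have F1: "ff n k (i+n) = i + n - 1 + d" using assms by (simp add: ff_def ef_def d_def)
  have F2: "ff n k (i+2*n) = i + 2*n - 1 + (if i \<le> d then d - i else 0)"
    using assms by (auto simp: ff_def ef_def d_def)
  have adj: "(\<exists>s\<le>k. j mod n = (i+s) mod n) \<longleftrightarrow> (i + d \<le> r \<or> (r < i \<and> i + d \<le> r + n))"
  proof -
    have "(\<exists>s\<le>k. j mod n = (i+s) mod n) \<longleftrightarrow> (\<exists>s\<le>k. j = i+s \<or> j+n = i+s)"
    proof -
      have m: "(j mod n = (i+s) mod n) = (j = i+s \<or> j+n = i+s)" if "s \<le> k" for s
        by (rule modeq) (use assms that in auto)
      show ?thesis using m by blast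
    qed
    also have "\<dots> \<longleftrightarrow> (i + d \<le> r \<or> (r < i \<and> i + d \<le> r + n))"
      using adj_arith[of k n i j] assms unfolding r_def rr_def d_def by simp
    finally show ?thesis .
  qed
  have altA: "alternate (wrd n k) (i,False) (j,True) \<longleftrightarrow>
     (\<forall>k1\<in>?A. \<forall>k2\<in>?A. k1 < k2 \<and> letter n k k1 = letter n k k2 \<longrightarrow>
          (\<exists>k3\<in>?A. k1 < k3 \<and> k3 < k2 \<and> letter n k k3 \<noteq> letter n k k1))"
    unfolding wrd_def alt_iff[OF finite_Keys] by blast
  have oXX: "KX n k i < KX n k (i+n)" "KX n k (i+n) < KX n k (i+2*n)" using assms by (auto simp: KX_less)
  have oYY: "KY r < KY (r+n)" "KY (r+n) < KY (r+2*n)" using assms by (auto simp: KY_less)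
  show ?thesis
  proof (cases "i + d \<le> r \<or> (r < i \<and> i + d \<le> r + n)")
    case True
    have "alternate (wrd n k) (i,False) (j,True)"
    proof (cases "i + d \<le> r")
      case True
      have o: "KX n k i < KY r" "KY r < KX n k (i+n)" "KX n k (i+n) < KY (r+n)"
        "KY (r+n) < KX n k (i+2*n)" "KX n k (i+2*n) < KY (r+2*n)"
        unfolding KX_KY_less KY_KX_less F0 F1 F2 using True r assms by auto
      show ?thesis unfolding altA
        by (rule interleave_ok[OF o]) (use lX lY A in auto)
    next
      case False
      hence c: "r < i" "i + d \<le> r + n" using \<open>i + d \<le> r \<or> (r < i \<and> i + d \<le> r + n)\<close> by auto
      have o: "KY r < KX n k i" "KX n k i < KY (r+n)" "KY (r+n) < KX n k (i+n)"
        "KX n k (i+n) < KY (r+2*n)" "KY (r+2*n) < KX n k (i+2*n)"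
        unfolding KX_KY_less KY_KX_less F0 F1 F2 using c r assms by auto
      have A': "?A = {KY r, KY (r+n), KY (r+2*n), KX n k i, KX n k (i+n), KX n k (i+2*n)}"
        using A by auto
      show ?thesis unfolding altA
        by (rule interleave_ok[OF o _ _ _ _ _ _ _ A']) (use lX lY in auto)
    qed
    thus ?thesis using True adj by simp
  next
    case False
    have "\<not> alternate (wrd n k) (i,False) (j,True)"
    proof (cases "i \<le> r")
      case True
      hence c: "r < i + d" using False by auto
      have o: "KX n k i < KY r" "KY (r+n) < KX n k (i+n)"
        unfolding KX_KY_less KY_KX_less F0 F1 using True c r assms by auto
      show ?thesis unfolding altA
      proof
        assume H: "\<forall>k1\<in>?A. \<forall>k2\<in>?A. k1 < k2 \<and> letter n k k1 = letter n k k2 \<longrightarrow>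
          (\<exists>k3\<in>?A. k1 < k3 \<and> k3 < k2 \<and> letter n k k3 \<noteq> letter n k k1)"
        have m1: "KY r \<in> ?A" "KY (r+n) \<in> ?A" unfolding A by auto
        have e: "KY r < KY (r+n) \<and> letter n k (KY r) = letter n k (KY (r+n))" using oYY lY by simp
        from mp[OF bspec[OF bspec[OF H m1(1)] m1(2)] e] obtain k3 where
          k3: "k3 \<in> ?A" "KY r < k3" "k3 < KY (r+n)" "letter n k k3 \<noteq> letter n k (KY r)" by blast
        from k3(1) have "k3 \<in> {KX n k i, KX n k (i+n), KX n k (i+2*n), KY r, KY (r+n), KY (r+2*n)}"
          using A by simp
        moreover have "k3 \<noteq> KX n k i" using k3(2) o(1) less_asym by blast
        moreover have "k3 \<noteq> KX n k (i+n)" using k3(3) o(2) less_asym by blast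
        moreover have "k3 \<noteq> KX n k (i+2*n)" using k3(3) o(2) oXX(2) less_asym less_trans by blast
        ultimately show False using k3(4) lY by auto
      qed
    next
      case False
      hence c: "r < i" "r + n < i + d" using \<open>\<not> (i + d \<le> r \<or> (r < i \<and> i + d \<le> r + n))\<close> by auto
      have o: "KX n k i < KY (r+n)" "KY (r+2*n) < KX n k (i+n)"
        unfolding KX_KY_less KY_KX_less F0 F1 using c r assms by auto
      show ?thesis unfolding altA
      proof
        assume H: "\<forall>k1\<in>?A. \<forall>k2\<in>?A. k1 < k2 \<and> letter n k k1 = letter n k k2 \<longrightarrow>
          (\<exists>k3\<in>?A. k1 < k3 \<and> k3 < k2 \<and> letter n k k3 \<noteq> letter n k k1)"
        have m1: "KY (r+n) \<in> ?A" "KY (r+2*n) \<in> ?A" unfolding A by auto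
        have e: "KY (r+n) < KY (r+2*n) \<and> letter n k (KY (r+n)) = letter n k (KY (r+2*n))" using oYY lY by simp
        from mp[OF bspec[OF bspec[OF H m1(1)] m1(2)] e] obtain k3 where
          k3: "k3 \<in> ?A" "KY (r+n) < k3" "k3 < KY (r+2*n)" "letter n k k3 \<noteq> letter n k (KY (r+n))" by blast
        from k3(1) have "k3 \<in> {KX n k i, KX n k (i+n), KX n k (i+2*n), KY r, KY (r+n), KY (r+2*n)}"
          using A by simp
        moreover have "k3 \<noteq> KX n k i" using k3(2) o(1) less_asym by blast
        moreover have "k3 \<noteq> KX n k (i+n)" using k3(3) o(2) less_asym by blast
        moreover have "k3 \<noteq> KX n k (i+2*n)" using k3(3) o(2) oXX(2) less_asym less_trans by blast
        ultimately show False using k3(4) lY by auto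
      qed
    qed
    thus ?thesis using False adj by simp
  qed
qed

theorem mainTheorem5:
  fixes n k :: nat
  assumes "n \<ge> 1" and "k \<le> n - 1"
  shows "word_representable (crown_vertices n) (compl_gen_crown_adj n k)"
  unfolding word_representable_def
proof (intro exI[of _ "wrd n k"] conjI ballI impI)
  have k1: "k + 1 \<le> n" using assms by auto
  show "set (wrd n k) = crown_vertices n"
  proof
    show "set (wrd n k) \<subseteq> crown_vertices n"
      using lab_range[OF assms(1)] by (auto simp: wrd_def finite_Keys Keys_def crown_vertices_def)
  next
    show "crown_vertices n \<subseteq> set (wrd n k)"
    proof
      fix v assume v: "v \<in> crown_vertices n"
      obtain i b where ib: "v = (i, b)" "i \<in> {1..n}" using v by (cases v) (auto simp: crown_vertices_def)
      have sw: "set (wrd n k) = letter n k ` Keys n k" by (simp add: wrd_def finite_Keys)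
      show "v \<in> set (wrd n k)"
      proof (cases b)
        case False
        have "KX n k i \<in> Keys n k" using ib by (auto simp: Keys_def)
        moreover have "letter n k (KX n k i) = v" using ib False lab_add[of i n 0] by auto
        ultimately show ?thesis unfolding sw by (metis imageI)
      next
        case True
        define r where "r = rr n k i"
        have "r \<in> {u\<in>{1..3*n}. lab n (u+k+1) = i}" using Yset[of n k i] assms k1 ib by (simp add: r_def)
        hence "KY r \<in> Keys n k" "letter n k (KY r) = v" using ib True by (auto simp: Keys_def)
        thus ?thesis unfolding sw by (metis imageI)
      qed
    qed
  qed
  fix x y assume x: "x \<in> crown_vertices n" and y: "y \<in> crown_vertices n" and xy: "x \<noteq> y"
  obtain i bx where xi: "x = (i, bx)" "i \<in> {1..n}" using x by (cases x) (auto simp: crown_vertices_def)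
  obtain j bY where yj: "y = (j, bY)" "j \<in> {1..n}" using y by (cases y) (auto simp: crown_vertices_def)
  show "alternate (wrd n k) x y \<longleftrightarrow> compl_gen_crown_adj n k x y"
  proof (cases bx; cases bY)
    assume "bx" "bY"
    thus ?thesis using sameY[OF assms(1) xi(2) yj(2)] xy xi yj by (auto simp: compl_gen_crown_adj_def)
  next
    assume "\<not> bx" "\<not> bY"
    thus ?thesis using sameX[OF assms(1) xi(2) yj(2)] xy xi yj by (auto simp: compl_gen_crown_adj_def)
  next
    assume "\<not> bx" "bY"
    moreover have "compl_gen_crown_adj n k (i,False) (j,True) \<longleftrightarrow> (\<exists>s\<le>k. j mod n = (i+s) mod n)"
      by (auto simp: compl_gen_crown_adj_def)
    ultimately show ?thesis using XY[OF assms(1) k1 xi(2) yj(2)] xi yj by simp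
  next
    assume "bx" "\<not> bY"
    moreover have "compl_gen_crown_adj n k (j,False) (i,True) \<longleftrightarrow> (\<exists>s\<le>k. i mod n = (j+s) mod n)"
      by (auto simp: compl_gen_crown_adj_def)
    ultimately show ?thesis using XY[OF assms(1) k1 yj(2) xi(2)] xi yj alternate_sym adj_sym by metis
  qed
qed

end
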